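(* Let $X\in\mathbb{R}^{n\times d}$ with rows $x_1,\dots,x_n$, weighted by $w\in\mathbb{R}^n_{>0}$, be $\mu$-complex. Let $U$ be a matrix whose columns form an orthonormal basis of the column space of $D_wX$, with rows $U_i$. If $i\in[n]$ and $\beta\in\mathbb{R}^d$ satisfy $x_i\beta\ge 0.5$, then $w_i\,g(x_i\beta)\le 2(1+\mu)\|U_i\|_2\, f_w(X\beta)$.
   Context: $g(z)=\ln(1+e^z)$ and $f_w(X\beta)=\sum_{j=1}^n w_j g(x_j\beta)$. $D_w$ is the diagonal matrix with $(D_w)_{ii}=w_i$. For a vector $v$, $v^+$ and $v^-$ denote the vectors of its positive and negative entries. $\mu_w(X)=\sup_{\beta:\,D_wX\beta\neq0}\|(D_wX\beta)^+\|_1/\|(D_wX\beta)^-\|_1$, and $X$ weighted by $w$ is $\mu$-complex if $\mu_w(X)\le\mu$. *)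

theory Defs
  imports "HOL-Analysis.Analysis"
begin

definition g :: "real \<Rightarrow> real" where
  "g z = ln (1 + exp z)"

definition f_w :: "real^'n \<Rightarrow> real^'n \<Rightarrow> real" where
  "f_w w v = (\<Sum>j\<in>UNIV. w $ j * g (v $ j))"

definition Dw :: "real^'n \<Rightarrow> real^'n^'n" where
  "Dw w = (\<chi> i j. if i = j then w $ i else 0)"

definition pos_part :: "real^'n \<Rightarrow> real^'n" where
  "pos_part v = (\<chi> i. max (v $ i) 0)"

definition neg_part :: "real^'n \<Rightarrow> real^'n" where
  "neg_part v = (\<chi> i. min (v $ i) 0)"

definition l1norm :: "real^'n \<Rightarrow> real" where
  "l1norm v = (\<Sum>i\<in>UNIV. \<bar>v $ i\<bar>)"

definition ratio_pm :: "real^'n \<Rightarrow> ereal" where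
  "ratio_pm v = (if l1norm (neg_part v) = 0 then \<infinity>
                 else ereal (l1norm (pos_part v) / l1norm (neg_part v)))"

definition mu_w :: "real^'n \<Rightarrow> real^'d^'n \<Rightarrow> ereal" where
  "mu_w w X = (SUP \<beta> \<in> {\<beta>. (Dw w ** X) *v \<beta> \<noteq> 0}. ratio_pm ((Dw w ** X) *v \<beta>))"

definition mu_complex :: "real \<Rightarrow> real^'n \<Rightarrow> real^'d^'n \<Rightarrow> bool" where
  "mu_complex \<mu> w X \<longleftrightarrow> mu_w w X \<le> ereal \<mu>"

definition orthonormal_col_basis :: "real^'k^'n \<Rightarrow> real^'m^'n \<Rightarrow> bool" where
  "orthonormal_col_basis U M \<longleftrightarrow>
     (\<forall>j. norm (column j U) = 1) \<and>
     (\<forall>j j'. j \<noteq> j' \<longrightarrow> column j U \<bullet> column j' U = 0) \<and>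
     span (columns U) = range (\<lambda>\<beta>. M *v \<beta>)"

end

theory Submission
  imports Defs
begin

lemma g_le_2: assumes "z \<ge> 1/2" shows "g z \<le> 2 * z"
proof -
  have e: "exp (1/2::real) \<ge> 1.625"
    using exp_lower_Taylor_quadratic[of "1/2::real"] by (simp add: power2_eq_square)
  have "exp z \<ge> exp (1/2)" using assms by simp
  hence t: "exp z \<ge> 1.625" using e by linarith
  have "1 + exp z \<le> exp z * exp z"
  proof -
    have "(exp z - 1.625) * (exp z + 0.625) \<ge> 0" using t by (intro mult_nonneg_nonneg) auto
    thus ?thesis by (simp add: algebra_simps)
  qed
  also have "\<dots> = exp (2*z)" by (metis exp_add mult_2)
  finally have "ln (1 + exp z) \<le> ln (exp (2*z))"
    by (intro ln_mono) (auto simp: add_pos_pos)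
  thus ?thesis by (simp add: g_def)
qed

lemma g_ge: "g z \<ge> max z 0"
proof -
  have "ln (1 + exp z) \<ge> ln (exp z)" by (intro ln_mono) auto
  moreover have "ln (1 + exp z) \<ge> ln 1" by (intro ln_mono) auto
  ultimately show ?thesis by (simp add: g_def)
qed

lemma proj_fix:
  fixes U :: "real^'k^'n"
  assumes on: "orthonormal_col_basis U M" and z: "z \<in> span (columns U)"
  shows "U *v (transpose U *v z) = z"
proof -
  have sub: "subspace {v. U *v (transpose U *v v) = v}"
    unfolding subspace_def by (auto simp del: transpose_matrix_vector simp add: matrix_vector_right_distrib matrix_vector_mult_scaleR matrix_vector_mult_0_right)
  have "\<And>k. transpose U *v column k U = axis k 1"
  proof -
    fix k
    show "transpose U *v column k U = axis k 1"
    proof (subst vec_eq_iff, intro allI)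
      fix j
      have "(transpose U *v column k U) $ j = column j U \<bullet> column k U"
        by (simp add: matrix_vector_mult_def transpose_def column_def inner_vec_def)
      also have "\<dots> = axis k 1 $ j"
      proof (cases "j = k")
        case True
        have "column k U \<bullet> column k U = 1" using on unfolding orthonormal_col_basis_def
          by (metis norm_eq_1)
        thus ?thesis using True by (simp add: axis_def)
      next
        case False thus ?thesis using on unfolding orthonormal_col_basis_def by (simp add: axis_def)
      qed
      finally show "(transpose U *v column k U) $ j = axis k 1 $ j" .
    qed
  qed
  hence "columns U \<subseteq> {v. U *v (transpose U *v v) = v}"
    by (auto simp: columns_def matrix_vector_mult_basis)
  hence "span (columns U) \<subseteq> {v. U *v (transpose U *v v) = v}"
    using sub by (rule span_minimal)
  thus ?thesis using z by auto
qed

theorem lemma7: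
  fixes X :: "real^'d^'n" and w :: "real^'n" and \<mu> :: real
    and U :: "real^'k^'n" and i :: 'n and \<beta> :: "real^'d"
  assumes "\<forall>j. w $ j > 0"
    and "mu_complex \<mu> w X"
    and "orthonormal_col_basis U (Dw w ** X)"
    and "(X $ i) \<bullet> \<beta> \<ge> 1/2"
  shows "w $ i * g ((X $ i) \<bullet> \<beta>) \<le> 2 * (1 + \<mu>) * norm (U $ i) * f_w w (X *v \<beta>)"
proof -
  define M where "M = Dw w ** X"
  define z where "z = M *v \<beta>"
  have Xb: "\<And>j. (X *v \<beta>) $ j = X $ j \<bullet> \<beta>"
    by (simp add: matrix_vector_mult_def inner_vec_def mult.commute)
  have zj: "\<And>j. z $ j = w $ j * (X $ j \<bullet> \<beta>)"
  proof -
    fix j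
    have "z $ j = (Dw w *v (X *v \<beta>)) $ j" by (simp add: z_def M_def matrix_vector_mul_assoc)
    also have "\<dots> = (\<Sum>k\<in>UNIV. if k = j then w $ j * (X *v \<beta>) $ j else 0)"
      unfolding Dw_def matrix_vector_mult_def[of "\<chi> i j. if i = j then w $ i else 0"] vec_lambda_beta by (intro sum.cong) auto
    also have "\<dots> = w $ j * (X $ j \<bullet> \<beta>)" by (simp add: Xb)
    finally show "z $ j = w $ j * (X $ j \<bullet> \<beta>)" .
  qed
  have wi: "w $ i > 0" using assms(1) by auto
  have zi: "z $ i \<ge> w $ i / 2" using zj[of i] assms(4) wi
    using mult_left_mono[of "1/2" "X $ i \<bullet> \<beta>" "w $ i"] by simp
  hence zi0: "z $ i > 0" using wi by linarith
  define P where "P = l1norm (pos_part z)"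
  define N where "N = l1norm (neg_part z)"
  have P_ge: "P \<ge> z $ i"
  proof -
    have "z $ i = max (z$i) 0" using zi0 by simp
    also have "\<dots> \<le> (\<Sum>j\<in>UNIV. \<bar>pos_part z $ j\<bar>)"
      using member_le_sum[of i UNIV "\<lambda>j. \<bar>pos_part z $ j\<bar>"] by (simp add: pos_part_def)
    finally show ?thesis by (simp add: P_def l1norm_def)
  qed
  hence Ppos: "P > 0" using zi0 by linarith
  have N0: "N \<ge> 0" unfolding N_def l1norm_def by (simp add: sum_nonneg)
  have "ratio_pm (M *v (-\<beta>)) \<le> ereal \<mu>"
  proof -
    have ne: "M *v (-\<beta>) \<noteq> 0"
    proof
      assume "M *v (-\<beta>) = 0"
      hence "z = 0" by (simp add: z_def vec_eq_iff matrix_vector_mult_def sum_negf)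
      thus False using zi0 by simp
    qed
    have "ratio_pm (M *v (-\<beta>)) \<le> mu_w w X"
      unfolding mu_w_def M_def[symmetric] using ne by (intro SUP_upper) auto
    thus ?thesis using assms(2) unfolding mu_complex_def by simp
  qed
  moreover have "M *v (-\<beta>) = - z" by (simp add: z_def vec_eq_iff matrix_vector_mult_def sum_negf)
  moreover have "l1norm (neg_part (-z)) = P"
    unfolding P_def l1norm_def neg_part_def pos_part_def
    by (intro sum.cong) auto
  moreover have "l1norm (pos_part (-z)) = N"
    unfolding N_def l1norm_def neg_part_def pos_part_def
    by (intro sum.cong) auto
  ultimately have "N / P \<le> \<mu>" using Ppos unfolding ratio_pm_def by auto
  hence NP: "N \<le> \<mu> * P" using Ppos by (simp add: divide_le_eq)
  hence mu0: "\<mu> \<ge> 0" using N0 Ppos by (metis less_le_not_le mult_neg_pos order_trans not_le)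
  have l1: "l1norm z = P + N"
    unfolding P_def N_def l1norm_def neg_part_def pos_part_def sum.distrib[symmetric]
    by (intro sum.cong) auto
  have zspan: "z \<in> span (columns U)"
    using assms(3) unfolding orthonormal_col_basis_def M_def[symmetric] z_def by auto
  define c where "c = transpose U *v z"
  have zc: "U *v c = z" using proj_fix[OF assms(3) zspan] by (simp add: c_def)
  have "c \<bullet> c = z \<bullet> z"
  proof -
    have "c \<bullet> c = c \<bullet> (transpose U *v z)" by (simp add: c_def)
    also have "\<dots> = (c v* transpose U) \<bullet> z" by (rule dot_lmul_matrix[symmetric])
    also have "\<dots> = z \<bullet> z" using zc by simp
    finally show ?thesis .
  qed
  hence nc: "norm c = norm z" by (simp add: norm_eq_sqrt_inner)
  have "z $ i = U $ i \<bullet> c" unfolding zc[symmetric]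
    by (simp add: inner_vec_def matrix_vector_mult_def)
  also have "\<dots> \<le> norm (U $ i) * norm c" by (rule norm_cauchy_schwarz)
  also have "\<dots> \<le> norm (U $ i) * l1norm z"
    using nc norm_le_l1_cart[of z] by (simp add: l1norm_def mult_left_mono)
  also have "\<dots> \<le> norm (U $ i) * ((1 + \<mu>) * P)"
    using l1 NP by (intro mult_left_mono) (auto simp: algebra_simps)
  finally have zbound: "z $ i \<le> norm (U $ i) * ((1 + \<mu>) * P)" .
  have Pf: "P \<le> f_w w (X *v \<beta>)"
    unfolding P_def l1norm_def f_w_def
  proof (intro sum_mono)
    fix j
    have wj: "w $ j > 0" using assms(1) by auto
    have "\<bar>pos_part z $ j\<bar> = max (z $ j) 0" by (simp add: pos_part_def)
    also have "\<dots> = w $ j * max (X $ j \<bullet> \<beta>) 0"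
    proof (cases "X $ j \<bullet> \<beta> \<ge> 0")
      case True
      hence "z $ j \<ge> 0" using wj by (simp add: zj)
      thus ?thesis using True by (simp add: zj)
    next
      case False
      hence "z $ j < 0" using wj by (simp add: zj mult_pos_neg)
      thus ?thesis using False by simp
    qed
    also have "\<dots> \<le> w $ j * g ((X *v \<beta>) $ j)"
      using assms(1) g_ge[of "X $ j \<bullet> \<beta>"] by (simp add: Xb less_imp_le mult_left_mono)
    finally show "\<bar>pos_part z $ j\<bar> \<le> w $ j * g ((X *v \<beta>) $ j)" .
  qed
  have "w $ i * g ((X $ i) \<bullet> \<beta>) \<le> w $ i * (2 * (X $ i \<bullet> \<beta>))"
    using g_le_2[OF assms(4)] wi by simp
  also have "\<dots> = 2 * z $ i" by (simp add: zj)
  also have "\<dots> \<le> 2 * (norm (U $ i) * ((1 + \<mu>) * P))" using zbound by simp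
  also have "\<dots> \<le> 2 * (norm (U $ i) * ((1 + \<mu>) * f_w w (X *v \<beta>)))"
    using Pf mu0 by (intro mult_left_mono) auto
  finally show ?thesis by (simp add: algebra_simps)
qed

end
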